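(* Assume the conditional linking at random (CLAR) assumption $P(L=1\mid \tilde{T}, \Delta, Q=0, \mathbf{X}) = P(L=1\mid Q=0, \mathbf{X})$ holds. Then for any $(\boldsymbol\beta,\lambda_0)$, $$\mathbb{E}\big(l(\boldsymbol\beta,\lambda_0)\big) = \mathbb{E}\left[\frac{I(L+Q>0)\, l(\boldsymbol\beta,\lambda_0)}{Q + (1-Q)\,P(L=1\mid \mathbf{X}, Q=0)}\right],$$ where $l(\boldsymbol\beta,\lambda_0) = \log\big(\lambda(\tilde{T}\mid \mathbf{X})^{\Delta} S(\tilde{T}\mid \mathbf{X})\big)$ is the Cox log-likelihood contribution of a single observation, with $\lambda(t\mid\mathbf{X}) = \lambda_0(t)\exp(\boldsymbol\beta^T\mathbf{X})$ and $S(t\mid\mathbf{X})$ the corresponding conditional survival function.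
   Context: Participants of a clinical trial are possibly linked to an observational follow-up dataset. $T$ is the failure time, $C_1$ the censoring time within the trial, $C_2$ the censoring time in the observational follow-up, $C=\max(C_1,C_2)$, $\tilde{T}=\min(T,C)$, $\Delta=I(T\le C)$, $Q=I(T\le C_1)$ is the in-trial event indicator, $L\in\{0,1\}$ the linkage indicator, and $\mathbf{X}\in\mathbb{R}^p$ the (time-independent) covariates including treatment. The pair $(\tilde{T},\Delta)$ is observed when $L=1$ or $Q=1$, and missing when $L=0,Q=0$. Expectations are over $(L,Q,\tilde{T},\Delta,\mathbf{X})$, and $P(L=1\mid \mathbf{X},Q=0)>0$ so the weight is well defined. *)

theory Defs
  imports "HOL-Probability.Probability"
begin

definition cox_hazard :: "(real \<Rightarrow> real) \<Rightarrow> real ^ 'p \<Rightarrow> real \<Rightarrow> real ^ 'p \<Rightarrow> real" where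
  "cox_hazard lam0 beta t x = lam0 t * exp (beta \<bullet> x)"

definition cox_surv :: "(real \<Rightarrow> real) \<Rightarrow> real ^ 'p \<Rightarrow> real \<Rightarrow> real ^ 'p \<Rightarrow> real" where
  "cox_surv lam0 beta t x = exp (- ((LBINT s=0..t. lam0 s) * exp (beta \<bullet> x)))"

definition cox_loglik :: "real ^ 'p \<Rightarrow> (real \<Rightarrow> real) \<Rightarrow> real \<Rightarrow> real \<Rightarrow> real ^ 'p \<Rightarrow> real" where
  "cox_loglik beta lam0 t d x =
     ln ((if d = 1 then cox_hazard lam0 beta t x else 1) * cox_surv lam0 beta t x)"

end

theory Submission
  imports Defs
begin

lemma Lam_meas:
  fixes lam0 :: "real \<Rightarrow> real"
  assumes [measurable]: "lam0 \<in> borel_measurable borel"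
  shows "(\<lambda>t::real. LBINT s=0..t. lam0 s) \<in> borel_measurable borel"
proof -
  have eqp: "(LBINT s=0..t. lam0 s) = (LBINT s. indicator {0<..<t} s * lam0 s) - (LBINT s. indicator {t<..<0} s * lam0 s)" for t :: real
    proof (cases "0 \<le> t")
      case True
      have "{t<..<(0::real)} = {}" using True by auto
      then show ?thesis using True
        by (simp add: interval_lebesgue_integral_def set_lebesgue_integral_def zero_ereal_def)
    next
      case False
      have "{0<..<(t::real)} = {}" using False by auto
      then show ?thesis using False
        by (simp add: interval_lebesgue_integral_def set_lebesgue_integral_def zero_ereal_def)
    qed
  have eq: "(\<lambda>t::real. LBINT s=0..t. lam0 s) = (\<lambda>t::real. (LBINT s. indicator {0<..<t} s * lam0 s) - (LBINT s. indicator {t<..<0} s * lam0 s))"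
    using eqp by (intro ext) simp
  have m1: "(\<lambda>t::real. LBINT s. indicator {0<..<t} s * lam0 s) \<in> borel_measurable borel"
  proof (rule lborel.borel_measurable_lebesgue_integral)
    have "(\<lambda>p::real\<times>real. indicator {0<..<fst p} (snd p) * lam0 (snd p)) \<in> borel_measurable (borel \<Otimes>\<^sub>M lborel)"
      unfolding indicator_def greaterThanLessThan_iff by measurable
    then show "(\<lambda>(t,s). indicator {0<..<t} s * lam0 s) \<in> borel_measurable (borel \<Otimes>\<^sub>M lborel)"
      by (simp add: case_prod_beta')
  qed
  have m2: "(\<lambda>t::real. LBINT s. indicator {t<..<0} s * lam0 s) \<in> borel_measurable borel"
  proof (rule lborel.borel_measurable_lebesgue_integral)
    have "(\<lambda>p::real\<times>real. indicator {fst p<..<0} (snd p) * lam0 (snd p)) \<in> borel_measurable (borel \<Otimes>\<^sub>M lborel)"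
      unfolding indicator_def greaterThanLessThan_iff by measurable
    then show "(\<lambda>(t,s). indicator {t<..<0} s * lam0 s) \<in> borel_measurable (borel \<Otimes>\<^sub>M lborel)"
      by (simp add: case_prod_beta')
  qed
  show ?thesis unfolding eq using m1 m2 by (rule borel_measurable_diff)
qed

lemma loglik_meas:
  fixes lam0 :: "real \<Rightarrow> real" and beta :: "real ^ 'p"
  assumes [measurable]: "lam0 \<in> borel_measurable borel"
  shows "(\<lambda>p::real\<times>real\<times>real\<times>(real^'p). cox_loglik beta lam0 (fst p) (fst (snd p)) (snd (snd (snd p)))) \<in> borel_measurable borel"
proof -
  note [measurable] = Lam_meas[OF assms]
  have "(\<lambda>p::real\<times>real\<times>real\<times>(real^'p). cox_loglik beta lam0 (fst p) (fst (snd p)) (snd (snd (snd p)))) \<in> borel_measurable (borel \<Otimes>\<^sub>M (borel \<Otimes>\<^sub>M (borel \<Otimes>\<^sub>M borel)))"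
    unfolding cox_loglik_def cox_hazard_def cox_surv_def by measurable
  then show ?thesis by (simp add: borel_prod)
qed

theorem proposition3p1:
  fixes M :: "'a measure"
    and T C1 C2 L :: "'a \<Rightarrow> real"
    and X :: "'a \<Rightarrow> real ^ 'p"
    and beta :: "real ^ 'p"
    and lam0 :: "real \<Rightarrow> real"
    and Ttil Delta Q :: "'a \<Rightarrow> real"
    and F_obs F_X :: "'a measure"
  assumes prob: "prob_space M"
    and T_meas: "T \<in> borel_measurable M"
    and C1_meas: "C1 \<in> borel_measurable M"
    and C2_meas: "C2 \<in> borel_measurable M"
    and L_meas: "L \<in> borel_measurable M"
    and X_meas: "X \<in> borel_measurable M"
    and L_01: "\<forall>\<omega>\<in>space M. L \<omega> \<in> {0, 1}"
    and Ttil_def: "\<And>\<omega>. Ttil \<omega> = min (T \<omega>) (max (C1 \<omega>) (C2 \<omega>))"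
    and Delta_def: "\<And>\<omega>. Delta \<omega> = (if T \<omega> \<le> max (C1 \<omega>) (C2 \<omega>) then 1 else 0)"
    and Q_def: "\<And>\<omega>. Q \<omega> = (if T \<omega> \<le> C1 \<omega> then 1 else 0)"
    and F_obs_def: "F_obs = vimage_algebra (space M) (\<lambda>\<omega>. (Ttil \<omega>, Delta \<omega>, Q \<omega>, X \<omega>)) borel"
    and F_X_def: "F_X = vimage_algebra (space M) (\<lambda>\<omega>. (Q \<omega>, X \<omega>)) borel"
    and lam0_meas: "lam0 \<in> borel_measurable borel"
    and lam0_nonneg: "\<And>t. lam0 t \<ge> 0"
    and lam0_locint: "\<And>a b. set_integrable lborel {a..b} lam0"
    and l_int: "integrable M (\<lambda>\<omega>. cox_loglik beta lam0 (Ttil \<omega>) (Delta \<omega>) (X \<omega>))"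
    and positivity: "AE \<omega> in M. Q \<omega> = 0 \<longrightarrow>
        real_cond_exp M F_X (indicator {\<omega>\<in>space M. L \<omega> = 1}) \<omega> > 0"
    and CLAR: "AE \<omega> in M. Q \<omega> = 0 \<longrightarrow>
        real_cond_exp M F_obs (indicator {\<omega>\<in>space M. L \<omega> = 1}) \<omega>
          = real_cond_exp M F_X (indicator {\<omega>\<in>space M. L \<omega> = 1}) \<omega>"
  shows "(\<integral>\<omega>. cox_loglik beta lam0 (Ttil \<omega>) (Delta \<omega>) (X \<omega>) \<partial>M)
       = (\<integral>\<omega>. indicator {\<omega>. L \<omega> + Q \<omega> > 0} \<omega>
                 * cox_loglik beta lam0 (Ttil \<omega>) (Delta \<omega>) (X \<omega>)
               / (Q \<omega> + (1 - Q \<omega>) * real_cond_exp M F_X (indicator {\<omega>\<in>space M. L \<omega> = 1}) \<omega>) \<partial>M)"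
proof -
  interpret prob_space M by (rule prob)
  have Ttil_eq: "Ttil = (\<lambda>\<omega>. min (T \<omega>) (max (C1 \<omega>) (C2 \<omega>)))" using Ttil_def by auto
  have Delta_eq: "Delta = (\<lambda>\<omega>. if T \<omega> \<le> max (C1 \<omega>) (C2 \<omega>) then 1 else 0)" using Delta_def by auto
  have Q_eq: "Q = (\<lambda>\<omega>. if T \<omega> \<le> C1 \<omega> then 1 else 0)" using Q_def by auto
  note [measurable] = T_meas C1_meas C2_meas L_meas X_meas
  have Tm[measurable]: "Ttil \<in> borel_measurable M" unfolding Ttil_eq by measurable
  have Dm[measurable]: "Delta \<in> borel_measurable M" unfolding Delta_eq by measurable
  have Qm[measurable]: "Q \<in> borel_measurable M" unfolding Q_eq by measurable
  define f where "f = (\<lambda>\<omega>. (Ttil \<omega>, Delta \<omega>, Q \<omega>, X \<omega>))"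
  have fm: "f \<in> borel_measurable M" unfolding f_def by measurable
  have sub_obs: "subalgebra M F_obs"
    unfolding subalgebra_def F_obs_def f_def[symmetric]
    using sets_image_in_sets[of M "space M" f borel] fm by auto
  have sub_X: "subalgebra M F_X"
    unfolding subalgebra_def F_X_def
    using sets_image_in_sets[of M "space M" "\<lambda>\<omega>. (Q \<omega>, X \<omega>)" borel] by auto
  have f_obs: "f \<in> borel_measurable F_obs"
    unfolding F_obs_def f_def[symmetric] by (rule measurable_vimage_algebra1) auto
  have QX_obs: "(\<lambda>\<omega>. (Q \<omega>, X \<omega>)) \<in> borel_measurable F_obs"
  proof -
    have "(\<lambda>p::real\<times>real\<times>real\<times>(real^'p). (fst (snd (snd p)), snd (snd (snd p)))) \<in> borel_measurable (borel \<Otimes>\<^sub>M (borel \<Otimes>\<^sub>M (borel \<Otimes>\<^sub>M borel)))"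
      by measurable
    then have "(\<lambda>p::real\<times>real\<times>real\<times>(real^'p). (fst (snd (snd p)), snd (snd (snd p)))) \<in> borel_measurable borel"
      by (simp add: borel_prod)
    from measurable_compose[OF f_obs this] show ?thesis by (simp add: f_def)
  qed
  have sub_X_obs: "subalgebra F_obs F_X"
    unfolding subalgebra_def
  proof
    show "space F_X = space F_obs" by (simp add: F_X_def F_obs_def)
    show "sets F_X \<subseteq> sets F_obs"
      unfolding F_X_def using sets_image_in_sets[of F_obs "space M" "\<lambda>\<omega>. (Q \<omega>, X \<omega>)" borel] QX_obs
      by (simp add: F_obs_def)
  qed
  interpret Fo: finite_measure_subalgebra M F_obs
    by (simp add: finite_measure_subalgebra_def finite_measure_subalgebra_axioms_def sub_obs finite_measure_axioms)
  interpret FX: finite_measure_subalgebra M F_X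
    by (simp add: finite_measure_subalgebra_def finite_measure_subalgebra_axioms_def sub_X finite_measure_axioms)
  define A where "A = {\<omega>\<in>space M. L \<omega> = 1}"
  have A_sets[measurable]: "A \<in> sets M" unfolding A_def by measurable
  define ind where "ind = (indicator A :: 'a \<Rightarrow> real)"
  define pi where "pi = real_cond_exp M F_X ind"
  define pio where "pio = real_cond_exp M F_obs ind"
  define l where "l = (\<lambda>\<omega>. cox_loglik beta lam0 (Ttil \<omega>) (Delta \<omega>) (X \<omega>))"
  have l_obs: "l \<in> borel_measurable F_obs"
  proof -
    from measurable_compose[OF f_obs loglik_meas[OF lam0_meas, of beta]]
    show ?thesis by (simp add: f_def l_def)
  qed
  have pi_obs: "pi \<in> borel_measurable F_obs"
    unfolding pi_def by (rule measurable_from_subalg[OF sub_X_obs borel_measurable_cond_exp])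
  define g where "g = (\<lambda>\<omega>. (1 - Q \<omega>) * l \<omega> / pi \<omega>)"
  have g_obs: "g \<in> borel_measurable F_obs"
  proof -
    have Q_obs: "Q \<in> borel_measurable F_obs"
    proof -
      have "(\<lambda>\<omega>. (Q \<omega>, X \<omega>)) \<in> F_obs \<rightarrow>\<^sub>M borel \<Otimes>\<^sub>M borel"
        using QX_obs by (simp add: borel_prod)
      from measurable_compose[OF this measurable_fst] show ?thesis by (simp add: o_def)
    qed
    note [measurable] = Q_obs l_obs pi_obs
    show ?thesis unfolding g_def by measurable
  qed
  have ind_meas[measurable]: "ind \<in> borel_measurable M" unfolding ind_def by measurable
  have ind_nn: "\<And>\<omega>. 0 \<le> ind \<omega>" unfolding ind_def by simp
  have l_meas[measurable]: "l \<in> borel_measurable M" using l_int unfolding l_def by measurable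
  have g_meas[measurable]: "g \<in> borel_measurable M" by (rule measurable_from_subalg[OF sub_obs g_obs])
  have Q01: "\<And>\<omega>. Q \<omega> = 0 \<or> Q \<omega> = 1" using Q_def by simp
  define nce where "nce = nn_cond_exp M F_obs (\<lambda>\<omega>. ennreal (ind \<omega>))"
  have nce_meas[measurable]: "nce \<in> borel_measurable M" unfolding nce_def by measurable
  have nce_eq: "AE \<omega> in M. nce \<omega> = ennreal (pio \<omega>)"
  proof -
    have neg0: "(\<lambda>\<omega>. ennreal (- ind \<omega>)) = (\<lambda>_. 0)"
      using ind_nn by (auto simp: ennreal_neg)
    have h0: "AE \<omega> in M. nn_cond_exp M F_obs (\<lambda>\<omega>. ennreal (- ind \<omega>)) \<omega> = 0"
      unfolding neg0 using Fo.nn_cond_exp_F_meas[of "\<lambda>_. 0"] by auto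
    have "(\<integral>\<^sup>+\<omega>. nce \<omega> \<partial>M) = (\<integral>\<^sup>+\<omega>. 1 * nce \<omega> \<partial>M)" by simp
    also have "\<dots> = (\<integral>\<^sup>+\<omega>. 1 * ennreal (ind \<omega>) \<partial>M)"
      unfolding nce_def by (rule Fo.nn_cond_exp_intg) auto
    also have "\<dots> = emeasure M A" unfolding ind_def using A_sets by (simp add: ennreal_indicator)
    finally have "(\<integral>\<^sup>+\<omega>. nce \<omega> \<partial>M) \<noteq> \<infinity>" by simp
    then have fin: "AE \<omega> in M. nce \<omega> \<noteq> \<infinity>" by (rule nn_integral_PInf_AE[rotated]) simp
    show ?thesis using fin h0
    proof eventually_elim
      case (elim \<omega>)
      then show ?case unfolding pio_def real_cond_exp_def nce_def[symmetric]
        by (simp add: less_top)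
    qed
  qed
  have key: "AE \<omega> in M. g \<omega> * pio \<omega> = (1 - Q \<omega>) * l \<omega>"
    using positivity CLAR
  proof eventually_elim
    case (elim \<omega>)
    show ?case
    proof (cases "Q \<omega> = 0")
      case True
      then have "pio \<omega> = pi \<omega>" "pi \<omega> > 0" using elim by (auto simp: pio_def pi_def ind_def A_def)
      then show ?thesis using True by (simp add: g_def)
    next
      case False
      then have "Q \<omega> = 1" using Q01 by blast
      then show ?thesis by (simp add: g_def)
    qed
  qed
  have key_abs: "AE \<omega> in M. ennreal \<bar>g \<omega>\<bar> * nce \<omega> = ennreal ((1 - Q \<omega>) * \<bar>l \<omega>\<bar>)"
    using positivity CLAR nce_eq
  proof eventually_elim
    case (elim \<omega>)
    show ?case
    proof (cases "Q \<omega> = 0")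
      case True
      then have "pio \<omega> = pi \<omega>" "pi \<omega> > 0" using elim by (auto simp: pio_def pi_def ind_def A_def)
      then have "\<bar>g \<omega>\<bar> * pio \<omega> = (1 - Q \<omega>) * \<bar>l \<omega>\<bar>" using True by (simp add: g_def abs_divide)
      moreover have "ennreal \<bar>g \<omega>\<bar> * nce \<omega> = ennreal (\<bar>g \<omega>\<bar> * pio \<omega>)"
        using elim \<open>pi \<omega> > 0\<close> \<open>pio \<omega> = pi \<omega>\<close> by (simp add: ennreal_mult)
      ultimately show ?thesis by simp
    next
      case False
      then have "Q \<omega> = 1" using Q01 by blast
      then show ?thesis by (simp add: g_def)
    qed
  qed
  have gind_int: "integrable M (\<lambda>\<omega>. g \<omega> * ind \<omega>)"
    unfolding integrable_iff_bounded
  proof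
    show "(\<lambda>\<omega>. g \<omega> * ind \<omega>) \<in> borel_measurable M" by measurable
    have "(\<integral>\<^sup>+\<omega>. ennreal (norm (g \<omega> * ind \<omega>)) \<partial>M) = (\<integral>\<^sup>+\<omega>. ennreal \<bar>g \<omega>\<bar> * ennreal (ind \<omega>) \<partial>M)"
      using ind_nn by (intro nn_integral_cong) (simp add: abs_mult ennreal_mult)
    also have "\<dots> = (\<integral>\<^sup>+\<omega>. ennreal \<bar>g \<omega>\<bar> * nce \<omega> \<partial>M)"
      unfolding nce_def by (rule Fo.nn_cond_exp_intg[symmetric]) (use g_obs in measurable)
    also have "\<dots> = (\<integral>\<^sup>+\<omega>. ennreal ((1 - Q \<omega>) * \<bar>l \<omega>\<bar>) \<partial>M)"
      by (rule nn_integral_cong_AE[OF key_abs])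
    also have "\<dots> \<le> (\<integral>\<^sup>+\<omega>. ennreal (norm (l \<omega>)) \<partial>M)"
    proof (rule nn_integral_mono)
      fix \<omega> show "ennreal ((1 - Q \<omega>) * \<bar>l \<omega>\<bar>) \<le> ennreal (norm (l \<omega>))"
        using Q01[of \<omega>] by auto
    qed
    also have "\<dots> < \<infinity>" using l_int unfolding l_def[symmetric] integrable_iff_bounded by simp
    finally show "(\<integral>\<^sup>+\<omega>. ennreal (norm (g \<omega> * ind \<omega>)) \<partial>M) < \<infinity>" .
  qed
  have step3: "(\<integral>\<omega>. g \<omega> * pio \<omega> \<partial>M) = (\<integral>\<omega>. g \<omega> * ind \<omega> \<partial>M)"
    unfolding pio_def by (rule Fo.real_cond_exp_intg(2)[OF gind_int g_obs ind_meas])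
  have step3': "(\<integral>\<omega>. (1 - Q \<omega>) * l \<omega> \<partial>M) = (\<integral>\<omega>. g \<omega> * ind \<omega> \<partial>M)"
  proof -
    have "(\<integral>\<omega>. g \<omega> * pio \<omega> \<partial>M) = (\<integral>\<omega>. (1 - Q \<omega>) * l \<omega> \<partial>M)"
    proof (rule integral_cong_AE)
      show "(\<lambda>\<omega>. g \<omega> * pio \<omega>) \<in> borel_measurable M" unfolding pio_def by measurable
      show "(\<lambda>\<omega>. (1 - Q \<omega>) * l \<omega>) \<in> borel_measurable M" by measurable
      show "AE \<omega> in M. g \<omega> * pio \<omega> = (1 - Q \<omega>) * l \<omega>" by (rule key)
    qed
    then show ?thesis using step3 by simp
  qed
  have l_int': "integrable M l" using l_int unfolding l_def .
  have Ql_int: "integrable M (\<lambda>\<omega>. Q \<omega> * l \<omega>)"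
  proof (rule Bochner_Integration.integrable_bound[OF l_int'])
    show "(\<lambda>\<omega>. Q \<omega> * l \<omega>) \<in> borel_measurable M" by measurable
    show "AE \<omega> in M. norm (Q \<omega> * l \<omega>) \<le> norm (l \<omega>)"
    proof (rule AE_I2)
      fix \<omega> show "norm (Q \<omega> * l \<omega>) \<le> norm (l \<omega>)" using Q01[of \<omega>] by (cases "Q \<omega> = 0") auto
    qed
  qed
  have Ql_int2: "integrable M (\<lambda>\<omega>. (1 - Q \<omega>) * l \<omega>)"
  proof (rule Bochner_Integration.integrable_bound[OF l_int'])
    show "(\<lambda>\<omega>. (1 - Q \<omega>) * l \<omega>) \<in> borel_measurable M" by measurable
    show "AE \<omega> in M. norm ((1 - Q \<omega>) * l \<omega>) \<le> norm (l \<omega>)"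
    proof (rule AE_I2)
      fix \<omega> show "norm ((1 - Q \<omega>) * l \<omega>) \<le> norm (l \<omega>)" using Q01[of \<omega>] by (cases "Q \<omega> = 0") auto
    qed
  qed
  have "(\<integral>\<omega>. l \<omega> \<partial>M) = (\<integral>\<omega>. Q \<omega> * l \<omega> + (1 - Q \<omega>) * l \<omega> \<partial>M)"
    by (rule Bochner_Integration.integral_cong) (auto simp: left_diff_distrib)
  also have "\<dots> = (\<integral>\<omega>. Q \<omega> * l \<omega> \<partial>M) + (\<integral>\<omega>. (1 - Q \<omega>) * l \<omega> \<partial>M)"
    using Ql_int Ql_int2 by simp
  also have "\<dots> = (\<integral>\<omega>. Q \<omega> * l \<omega> \<partial>M) + (\<integral>\<omega>. g \<omega> * ind \<omega> \<partial>M)"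
    using step3' by simp
  also have "\<dots> = (\<integral>\<omega>. Q \<omega> * l \<omega> + g \<omega> * ind \<omega> \<partial>M)"
    using Ql_int gind_int by simp
  also have "\<dots> = (\<integral>\<omega>. indicator {\<omega>. L \<omega> + Q \<omega> > 0} \<omega> * l \<omega>
               / (Q \<omega> + (1 - Q \<omega>) * pi \<omega>) \<partial>M)"
  proof (rule Bochner_Integration.integral_cong[OF refl])
    fix \<omega> assume w: "\<omega> \<in> space M"
    show "Q \<omega> * l \<omega> + g \<omega> * ind \<omega> = indicator {\<omega>. L \<omega> + Q \<omega> > 0} \<omega> * l \<omega>
               / (Q \<omega> + (1 - Q \<omega>) * pi \<omega>)"
    proof (cases "Q \<omega> = 0")
      case True
      have "L \<omega> = 0 \<or> L \<omega> = 1" using L_01 w by auto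
      then show ?thesis using True w by (auto simp: g_def ind_def A_def indicator_def)
    next
      case False
      then have "Q \<omega> = 1" using Q01 by blast
      have "L \<omega> = 0 \<or> L \<omega> = 1" using L_01 w by auto
      then show ?thesis using \<open>Q \<omega> = 1\<close> by (auto simp: g_def indicator_def)
    qed
  qed
  finally show ?thesis unfolding l_def pi_def ind_def A_def .
qed

end
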